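(* The functions $\omega_\pm$ are smooth on $R\setminus\{p_0\}$, and as $(x,y)\to p_0=(2,0)$, $$\omega_\pm=\frac{(x-2)\pm\sqrt{(x-2)^2+32y^2}}{4}+O\big((x-2)^2+32y^2\big).$$ For $(x,y)\in R_+$ one has $0\le\omega_+(x,y)\le 2|y|$, and for $(x,y)\in R_-$ one has $-2|y|\le\omega_-(x,y)\le 0$. Moreover, for each wedge $V_a$ there is a constant $C>0$ such that $|\omega_\pm(x,y)|\ge C|y|$ for $(x,y)\in V_a$.
   Context: For $x>0$, $y\in\mathbb{R}$ let $r_1^2=4+x^2+4x^2y^2$, $\Delta=((x+2)^2+8x^2y^2)((x-2)^2+8x^2y^2)$ and $$\omega_\pm(x,y)=\frac{x^2-4\pm\sqrt{\Delta}}{2r_1^2}.$$ (These are the eigenvalues of the bottom $2\times2$ block of the $3\times3$ symmetric tridiagonal matrix with spectrum $\{-1,0,1\}$ having bidiagonal coordinates $(x,y)$.) Let $p_0=(2,0)$, $R=\{(x,y): x>0,\ 4-4y^2-x^2y^2-8x^2y^4\ge 0\}$, $R_+=R\cap((0,2]\times\mathbb{R})$, $R_-=R\cap([2,\infty)\times\mathbb{R})$. For $0<a\le 1/10$ the wedge of height $a$ is $V_a=\{(x,y): |y|\le a,\ |y|\ge|x-2|/10\}$. *)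

theory Defs
  imports "HOL-Analysis.Analysis" "HOL-Library.Landau_Symbols"
begin

fun Ck_on :: "nat \<Rightarrow> 'a::euclidean_space set \<Rightarrow> ('a \<Rightarrow> real) \<Rightarrow> bool" where
  "Ck_on 0 S f = continuous_on S f"
| "Ck_on (Suc k) S f = (f differentiable_on S \<and>
      (\<forall>v\<in>Basis. Ck_on k S (\<lambda>z. frechet_derivative f (at z) v)))"

definition smooth_on :: "'a::euclidean_space set \<Rightarrow> ('a \<Rightarrow> real) \<Rightarrow> bool" where
  "smooth_on S f \<longleftrightarrow> open S \<and> (\<forall>k. Ck_on k S f)"

definition r1sq :: "real \<Rightarrow> real \<Rightarrow> real" where
  "r1sq x y = 4 + x^2 + 4 * x^2 * y^2"

definition Delta :: "real \<Rightarrow> real \<Rightarrow> real" where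
  "Delta x y = ((x + 2)^2 + 8 * x^2 * y^2) * ((x - 2)^2 + 8 * x^2 * y^2)"

definition omega_plus :: "real \<Rightarrow> real \<Rightarrow> real" where
  "omega_plus x y = (x^2 - 4 + sqrt (Delta x y)) / (2 * r1sq x y)"

definition omega_minus :: "real \<Rightarrow> real \<Rightarrow> real" where
  "omega_minus x y = (x^2 - 4 - sqrt (Delta x y)) / (2 * r1sq x y)"

definition p0 :: "real \<times> real" where "p0 = (2, 0)"

definition regR :: "(real \<times> real) set" where
  "regR = {(x, y). x > 0 \<and> 4 - 4 * y^2 - x^2 * y^2 - 8 * x^2 * y^4 \<ge> 0}"

definition regR_plus :: "(real \<times> real) set" where
  "regR_plus = regR \<inter> ({0<..2} \<times> UNIV)"

definition regR_minus :: "(real \<times> real) set" where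
  "regR_minus = regR \<inter> ({2..} \<times> UNIV)"

definition wedge :: "real \<Rightarrow> (real \<times> real) set" where
  "wedge a = {(x, y). \<bar>y\<bar> \<le> a \<and> \<bar>y\<bar> \<ge> \<bar>x - 2\<bar> / 10}"

end

theory Submission
  imports Defs
begin


inductive_set SF :: "(real \<times> real) set \<Rightarrow> ((real \<times> real) \<Rightarrow> real) set" for U where
  SF_const: "(\<lambda>z. c) \<in> SF U"
| SF_fst: "(\<lambda>z. fst z) \<in> SF U"
| SF_snd: "(\<lambda>z. snd z) \<in> SF U"
| SF_add: "f \<in> SF U \<Longrightarrow> g \<in> SF U \<Longrightarrow> (\<lambda>z. f z + g z) \<in> SF U"
| SF_mult: "f \<in> SF U \<Longrightarrow> g \<in> SF U \<Longrightarrow> (\<lambda>z. f z * g z) \<in> SF U"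
| SF_inv: "f \<in> SF U \<Longrightarrow> (\<forall>z\<in>U. f z \<noteq> 0) \<Longrightarrow> (\<lambda>z. inverse (f z)) \<in> SF U"
| SF_sqrt: "f \<in> SF U \<Longrightarrow> (\<forall>z\<in>U. f z > 0) \<Longrightarrow> (\<lambda>z. sqrt (f z)) \<in> SF U"

lemma SF_minus: "f \<in> SF U \<Longrightarrow> (\<lambda>z. - f z) \<in> SF U"
  using SF_mult[OF SF_const[of "-1"], of f U] by simp

lemma SF_diff: "f \<in> SF U \<Longrightarrow> g \<in> SF U \<Longrightarrow> (\<lambda>z. f z - g z) \<in> SF U"
  using SF_add[OF _ SF_minus, of f U g] by simp

lemma SF_divide: "f \<in> SF U \<Longrightarrow> g \<in> SF U \<Longrightarrow> (\<forall>z\<in>U. g z \<noteq> 0) \<Longrightarrow> (\<lambda>z. f z / g z) \<in> SF U"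
  using SF_mult[OF _ SF_inv, of f U g] by (simp add: divide_inverse)

lemma SF_pow2: "f \<in> SF U \<Longrightarrow> (\<lambda>z. (f z)^2) \<in> SF U"
  using SF_mult[of f U f] by (simp add: power2_eq_square)

lemma SF_deriv:
  assumes "f \<in> SF U"
  shows "\<exists>D. (\<forall>z\<in>U. (f has_derivative D z) (at z)) \<and> (\<forall>v. (\<lambda>z. D z v) \<in> SF U)"
  using assms
proof induction
  case (SF_const c)
  show ?case by (rule exI[of _ "\<lambda>z h. 0"]) (auto intro: SF.intros)
next
  case SF_fst
  show ?case
    by (rule exI[of _ "\<lambda>z h. fst h"]) (auto intro: SF.intros derivative_eq_intros)
next
  case SF_snd
  show ?case
    by (rule exI[of _ "\<lambda>z h. snd h"]) (auto intro: SF.intros derivative_eq_intros)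
next
  case (SF_add f g)
  then obtain Df Dg where f: "\<forall>z\<in>U. (f has_derivative Df z) (at z)" "\<forall>v. (\<lambda>z. Df z v) \<in> SF U"
    and g: "\<forall>z\<in>U. (g has_derivative Dg z) (at z)" "\<forall>v. (\<lambda>z. Dg z v) \<in> SF U" by blast
  show ?case
    by (rule exI[of _ "\<lambda>z h. Df z h + Dg z h"]) (use f g in \<open>auto intro: SF.intros has_derivative_add\<close>)
next
  case (SF_mult f g)
  then obtain Df Dg where f: "\<forall>z\<in>U. (f has_derivative Df z) (at z)" "\<forall>v. (\<lambda>z. Df z v) \<in> SF U"
    and g: "\<forall>z\<in>U. (g has_derivative Dg z) (at z)" "\<forall>v. (\<lambda>z. Dg z v) \<in> SF U" by blast
  show ?case
    by (rule exI[of _ "\<lambda>z h. f z * Dg z h + Df z h * g z"])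
       (use f g SF_mult.hyps in \<open>auto intro!: SF.intros has_derivative_mult\<close>)
next
  case (SF_inv f)
  then obtain Df where f: "\<forall>z\<in>U. (f has_derivative Df z) (at z)" "\<forall>v. (\<lambda>z. Df z v) \<in> SF U" by blast
  show ?case
    by (rule exI[of _ "\<lambda>z h. - (inverse (f z) * Df z h * inverse (f z))"])
       (use f SF_inv.hyps in \<open>auto intro!: SF.intros SF_minus has_derivative_inverse\<close>)
next
  case (SF_sqrt f)
  then obtain Df where f: "\<forall>z\<in>U. (f has_derivative Df z) (at z)" "\<forall>v. (\<lambda>z. Df z v) \<in> SF U" by blast
  have "\<forall>z\<in>U. ((\<lambda>z. sqrt (f z)) has_derivative (\<lambda>h. Df z h * (inverse (sqrt (f z)) / 2))) (at z)"
  proof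
    fix z assume z: "z \<in> U"
    show "((\<lambda>z. sqrt (f z)) has_derivative (\<lambda>h. Df z h * (inverse (sqrt (f z)) / 2))) (at z)"
      using DERIV_compose_FDERIV[OF DERIV_real_sqrt f(1)[rule_format, OF z]] SF_sqrt.hyps z by simp
  qed
  moreover have "(\<lambda>z. Df z v * (inverse (sqrt (f z)) / 2)) \<in> SF U" for v
  proof -
    have "(\<lambda>z. Df z v * (inverse (sqrt (f z)) * (1/2))) \<in> SF U"
    proof (intro SF_mult SF_inv SF_const)
      show "(\<lambda>z. Df z v) \<in> SF U" using f(2) by blast
      show sq: "(\<lambda>z. sqrt (f z)) \<in> SF U" using SF_sqrt.hyps by (intro SF.SF_sqrt) auto
      show "\<forall>z\<in>U. sqrt (f z) \<noteq> 0" using SF_sqrt.hyps by auto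
    qed
    moreover have "(\<lambda>z. Df z v * (inverse (sqrt (f z)) / 2)) = (\<lambda>z. Df z v * (inverse (sqrt (f z)) * (1/2)))"
      by simp
    ultimately show ?thesis by metis
  qed
  ultimately show ?case
    by (intro exI[of _ "\<lambda>z h. Df z h * (inverse (sqrt (f z)) / 2)"]) auto
qed

lemma Ck_cong:
  assumes "open S" "\<forall>z\<in>S. f z = g z" "Ck_on k S f"
  shows "Ck_on k S g"
  using assms(2,3)
proof (induction k arbitrary: f g)
  case 0
  then show ?case using continuous_on_cong by (metis Ck_on.simps(1))
next
  case (Suc k)
  have dg: "g differentiable at z" if "z \<in> S" for z
  proof -
    have "f differentiable at z" using Suc.prems that assms(1)
      by (simp add: differentiable_on_eq_differentiable_at)
    then obtain D where "(f has_derivative D) (at z)" by (auto simp: differentiable_def)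
    then have "(g has_derivative D) (at z)"
      using has_derivative_transform_within_open[OF _ assms(1) that] Suc.prems by blast
    then show ?thesis by (auto simp: differentiable_def)
  qed
  have eq: "frechet_derivative f (at z) = frechet_derivative g (at z)" if "z \<in> S" for z
  proof -
    have "f differentiable at z" using Suc.prems that assms(1)
      by (simp add: differentiable_on_eq_differentiable_at)
    then have "(f has_derivative frechet_derivative f (at z)) (at z)"
      using frechet_derivative_works by blast
    then have "(g has_derivative frechet_derivative f (at z)) (at z)"
      using has_derivative_transform_within_open[OF _ assms(1) that] Suc.prems by blast
    then show ?thesis using frechet_derivative_at by blast
  qed
  have "Ck_on k S (\<lambda>z. frechet_derivative g (at z) v)" if "v \<in> Basis" for v
    using Suc.IH[of "\<lambda>z. frechet_derivative f (at z) v" "\<lambda>z. frechet_derivative g (at z) v"] eq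
      Suc.prems that by auto
  then show ?case
    using dg assms(1)
    by (auto simp: differentiable_on_eq_differentiable_at)
qed

lemma SF_Ck:
  assumes "open U" "f \<in> SF U"
  shows "Ck_on k U f"
  using assms(2)
proof (induction k arbitrary: f)
  case 0
  then obtain D where "\<forall>z\<in>U. (f has_derivative D z) (at z)" using SF_deriv by blast
  then have "\<forall>z\<in>U. isCont f z" using has_derivative_continuous by blast
  then show ?case
    by (auto intro!: continuous_at_imp_continuous_on)
next
  case (Suc k)
  then obtain D where D: "\<forall>z\<in>U. (f has_derivative D z) (at z)" "\<forall>v. (\<lambda>z. D z v) \<in> SF U"
    using SF_deriv by blast
  have "f differentiable_on U"
    using D assms(1) by (auto simp: differentiable_on_eq_differentiable_at differentiable_def)
  moreover have "Ck_on k U (\<lambda>z. frechet_derivative f (at z) v)" for v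
  proof (rule Ck_cong[OF assms(1) _ Suc.IH[OF D(2)[rule_format, of v]]])
    show "\<forall>z\<in>U. D z v = frechet_derivative f (at z) v"
      using D(1) frechet_derivative_at by metis
  qed
  ultimately show ?case by simp
qed

definition UU :: "(real \<times> real) set" where "UU = {p. 0 < fst p} - {p0}"

lemma open_UU: "open UU"
  unfolding UU_def by (intro open_Diff open_Collect_less continuous_intros finite.intros)

lemma Delta_pos: "p \<in> UU \<Longrightarrow> ((fst p + 2)^2 + 8 * (fst p)^2 * (snd p)^2) * ((fst p - 2)^2 + 8 * (fst p)^2 * (snd p)^2) > 0"
proof -
  assume p: "p \<in> UU"
  obtain x y where xy: "p = (x, y)" by fastforce
  have x: "x > 0" "x \<noteq> 2 \<or> y \<noteq> 0" using p by (auto simp: UU_def p0_def xy)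
  have a: "(x + 2)^2 + 8 * x^2 * y^2 > 0" using x by (simp add: add_pos_nonneg)
  have b: "(x - 2)^2 + 8 * x^2 * y^2 > 0"
    using x by (auto simp: add_pos_nonneg add_nonneg_pos)
  show ?thesis using a b xy by simp
qed

lemma r1_pos: "2 * (4 + x^2 + 4 * x^2 * y^2) \<noteq> (0::real)"
  by (smt (verit) zero_le_power2 mult_nonneg_nonneg)

lemma smooth_part:
  "\<exists>U. regR - {p0} \<subseteq> U \<and> smooth_on U (\<lambda>p. omega_plus (fst p) (snd p))
                                \<and> smooth_on U (\<lambda>p. omega_minus (fst p) (snd p))"
proof (intro exI conjI)
  show "regR - {p0} \<subseteq> UU" by (auto simp: regR_def UU_def)
  have "(\<lambda>p. ((fst p)^2 - 4 + sqrt (((fst p + 2)^2 + 8 * (fst p)^2 * (snd p)^2) * ((fst p - 2)^2 + 8 * (fst p)^2 * (snd p)^2))) / (2 * (4 + (fst p)^2 + 4 * (fst p)^2 * (snd p)^2))) \<in> SF UU"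
    by (intro SF_divide SF_add SF_diff SF_mult SF_sqrt SF_pow2 SF_const SF_fst SF_snd ballI Delta_pos r1_pos)
  then show "smooth_on UU (\<lambda>p. omega_plus (fst p) (snd p))"
    unfolding smooth_on_def using SF_Ck open_UU
    by (simp add: omega_plus_def Delta_def r1sq_def)
  have "(\<lambda>p. ((fst p)^2 - 4 - sqrt (((fst p + 2)^2 + 8 * (fst p)^2 * (snd p)^2) * ((fst p - 2)^2 + 8 * (fst p)^2 * (snd p)^2))) / (2 * (4 + (fst p)^2 + 4 * (fst p)^2 * (snd p)^2))) \<in> SF UU"
    by (intro SF_divide SF_add SF_diff SF_mult SF_sqrt SF_pow2 SF_const SF_fst SF_snd ballI Delta_pos r1_pos)
  then show "smooth_on UU (\<lambda>p. omega_minus (fst p) (snd p))"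
    unfolding smooth_on_def using SF_Ck open_UU
    by (simp add: omega_minus_def Delta_def r1sq_def)
qed



lemma r1sq_pos: "r1sq x y > 0"
  unfolding r1sq_def by (smt (verit) zero_le_power2 mult_nonneg_nonneg)

lemma Delta_id: "Delta x y = (x^2 - 4)^2 + 16 * x^2 * y^2 * r1sq x y"
  unfolding Delta_def r1sq_def by algebra

lemma Delta_nonneg: "Delta x y \<ge> 0"
proof -
  have "0 \<le> 16 * x^2 * y^2 * r1sq x y" using r1sq_pos[of x y] by simp
  then show ?thesis unfolding Delta_id by (smt (verit) zero_le_power2)
qed

lemma core_bounds:
  fixes x y :: real
  assumes hu: "\<bar>x - 2\<bar> \<le> 1/10" and hy: "\<bar>y\<bar> \<le> 1/10"
  shows "\<bar>omega_plus x y - ((x - 2) + sqrt ((x - 2)^2 + 32 * y^2)) / 4\<bar> \<le> 2 * ((x - 2)^2 + 32 * y^2)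
       \<and> \<bar>omega_minus x y - ((x - 2) - sqrt ((x - 2)^2 + 32 * y^2)) / 4\<bar> \<le> 2 * ((x - 2)^2 + 32 * y^2)"
proof -
  define u where "u = x - 2"
  define s where "s = u^2 + 32 * y^2"
  define b where "b = sqrt s"
  define a where "a = sqrt (Delta x y)"
  define R where "R = r1sq x y"
  define Z where "Z = x^2 * y^2"
  define E where "E = 4 * u + u^2 + 4 * Z"
  have xu: "x = u + 2" unfolding u_def by simp
  have hu': "\<bar>u\<bar> \<le> 1/10" using hu unfolding u_def .
  have s0: "s \<ge> 0" unfolding s_def by simp
  have b0: "b \<ge> 0" unfolding b_def using s0 by simp
  have bb: "b * b = s" unfolding b_def using s0 by simp
  have ub: "\<bar>u\<bar> \<le> b" unfolding b_def by (rule real_le_rsqrt) (simp add: s_def)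
  have yb: "5 * \<bar>y\<bar> \<le> b" unfolding b_def
    by (rule real_le_rsqrt) (simp add: s_def power_mult_distrib)
  have yy: "y^2 \<le> \<bar>y\<bar> / 10"
  proof -
    have "\<bar>y\<bar> * \<bar>y\<bar> \<le> \<bar>y\<bar> * (1/10)" using hy by (intro mult_left_mono) auto
    then show ?thesis by (simp add: power2_eq_square abs_mult[symmetric])
  qed
  have uu: "u^2 \<le> \<bar>u\<bar> / 10"
  proof -
    have "\<bar>u\<bar> * \<bar>u\<bar> \<le> \<bar>u\<bar> * (1/10)" using hu' by (intro mult_left_mono) auto
    then show ?thesis by (simp add: power2_eq_square abs_mult[symmetric])
  qed
  have us: "u^2 \<le> s" and ys: "y^2 \<le> s / 32" unfolding s_def by simp_all
  have x2: "x^2 \<le> 5" "3 \<le> x^2"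
  proof -
    have x1: "19/10 \<le> x" using hu abs_le_iff[of "x - 2" "1/10"] by linarith
    have x2: "x \<le> 21/10" using hu abs_le_iff[of "x - 2" "1/10"] by linarith
    note x = x1 x2
    have "x^2 \<le> (21/10)^2" using x by (intro power_mono) auto
    then show "x^2 \<le> 5" by (simp add: power2_eq_square)
    have "(19/10)^2 \<le> x^2" using x by (intro power_mono) auto
    then show "3 \<le> x^2" by (simp add: power2_eq_square)
  qed
  have xy: "Z \<le> 5 * y^2" unfolding Z_def using x2 by (intro mult_right_mono) auto
  have xy0: "0 \<le> Z" unfolding Z_def by simp
  define A' where "A' = 8 * u + u^2 + 8 * Z"
  define B where "B = u^2 + 8 * Z"
  define B' where "B' = 8 * y^2 * (u * (u + 4))"
  have u2b: "u^2 \<le> b / 10" using uu ub by linarith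
  have xyb: "Z \<le> b / 10" using xy yy yb by linarith
  have u20: "0 \<le> u^2" by simp
  have ubb1: "u \<le> b" using ub by linarith
  have ubb2: "- u \<le> b" using ub by linarith
  note ubb = ubb1 ubb2
  have A'b: "\<bar>A'\<bar> \<le> 9 * b" unfolding A'_def abs_le_iff using u2b xyb u20 xy0 ubb by linarith
  have B0: "0 \<le> B" unfolding B_def using xy0 u20 by linarith
  have B2: "B \<le> 2 * s" unfolding B_def s_def using xy xy0 u20 zero_le_power2[of y] by (smt (verit))
  have sb0: "0 \<le> s * b" using s0 b0 by simp
  have B'b: "\<bar>B'\<bar> \<le> 2 * (s * b)"
  proof -
    have "\<bar>u\<bar> * \<bar>u + 4\<bar> \<le> b * 5" using ub hu' b0 by (intro mult_mono) auto
    moreover have "\<bar>B'\<bar> = 8 * y^2 * (\<bar>u\<bar> * \<bar>u + 4\<bar>)" unfolding B'_def by (simp add: abs_mult)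
    ultimately have "\<bar>B'\<bar> \<le> 8 * y^2 * (b * 5)"
      by (metis mult_left_mono zero_le_power2 mult_nonneg_nonneg zero_le_numeral)
    also have "\<dots> = 40 * (y^2 * b)" by simp
    also have "\<dots> \<le> 40 * (s / 32 * b)" using ys b0 by (intro mult_left_mono mult_right_mono) auto
    also have "\<dots> = 5/4 * (s * b)" by simp
    also have "\<dots> \<le> 2 * (s * b)" using sb0 by (simp add: mult.commute)
    finally show ?thesis .
  qed
  have Did: "Delta x y - 16 * s = A' * B + 16 * B'"
    unfolding Delta_def A'_def B_def B'_def s_def Z_def xu by algebra
  have AB0: "\<bar>A' * B\<bar> \<le> 9 * b * (2 * s)"
    unfolding abs_mult using A'b B0 B2 b0 by (intro mult_mono) auto
  have AB: "\<bar>A' * B\<bar> \<le> 18 * (s * b)" using AB0 by (simp add: mult_ac)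
  have B16: "\<bar>16 * B'\<bar> = 16 * \<bar>B'\<bar>" by simp
  have Dd: "\<bar>Delta x y - 16 * s\<bar> \<le> 50 * (s * b)"
    unfolding Did using AB B'b B16 abs_triangle_ineq[of "A' * B" "16 * B'"] by linarith
  have a0: "a \<ge> 0" unfolding a_def using Delta_nonneg[of x y] by simp
  have aa: "a * a = Delta x y" unfolding a_def using Delta_nonneg[of x y] by simp
  have a4b: "\<bar>a - 4 * b\<bar> \<le> 13 * s"
  proof (cases "b = 0")
    case True
    then have "s = 0" using bb by simp
    then have "Delta x y = 0" using Dd True by simp
    then have "a = 0" unfolding a_def by simp
    then show ?thesis using True s0 by simp
  next
    case False
    then have bp: "b > 0" using b0 by simp
    have "(a - 4 * b) * (a + 4 * b) = Delta x y - 16 * s"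
      using aa bb by (simp add: algebra_simps)
    then have "\<bar>a - 4 * b\<bar> * (a + 4 * b) \<le> 50 * (s * b)" using Dd a0 b0 by (simp add: abs_mult)
    moreover have "\<bar>a - 4 * b\<bar> * (4 * b) \<le> \<bar>a - 4 * b\<bar> * (a + 4 * b)"
      using a0 by (intro mult_left_mono) auto
    ultimately have "(\<bar>a - 4 * b\<bar> * 4) * b \<le> (50 * s) * b" by (simp add: mult_ac)
    then have "\<bar>a - 4 * b\<bar> * 4 \<le> 50 * s" using bp by (rule mult_right_le_imp_le)
    then show ?thesis using s0 by simp
  qed
  have Eb: "\<bar>E\<bar> \<le> 5 * b" unfolding E_def abs_le_iff using u2b xyb u20 xy0 ubb by linarith
  have RE: "R = 8 + E" unfolding R_def E_def Z_def r1sq_def xu by algebra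
  have R7: "R \<ge> 7"
  proof -
    have "0 \<le> 4 * x^2 * y^2" by simp
    then show ?thesis unfolding R_def r1sq_def using x2 by linarith
  qed
  have x4: "x^2 - 4 = u * (u + 4)" unfolding xu by algebra
  have Eu: "\<bar>E\<bar> * \<bar>u\<bar> \<le> 5 * b * b" using Eb ub b0 by (intro mult_mono) auto
  have Eb2: "\<bar>E\<bar> * b \<le> 5 * b * b" using Eb b0 by (intro mult_right_mono) auto
  have fin: "\<bar>w - (u + \<sigma> * b) / 4\<bar> \<le> 2 * s"
    if w: "w = (x^2 - 4 + \<sigma> * a) / (2 * R)" and sg: "\<bar>\<sigma>\<bar> = 1" for w \<sigma>
  proof -
    have Rp: "R > 0" using R7 by simp
    have "2 * R * w = x^2 - 4 + \<sigma> * a" using w Rp by simp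
    then have h: "2 * R * w = u * (u + 4) + \<sigma> * a" unfolding x4 .
    define N where "N = 2 * u^2 - E * u + \<sigma> * (2 * (a - 4 * b) - E * b)"
    have e1: "4 * R * (w - (u + \<sigma> * b) / 4) = 2 * (2 * R * w) - R * (u + \<sigma> * b)"
      by (simp add: right_diff_distrib)
    also have "\<dots> = 2 * (u * (u + 4) + \<sigma> * a) - (8 + E) * (u + \<sigma> * b)"
      by (subst h) (simp add: RE)
    also have "\<dots> = N"
      unfolding N_def by (simp add: algebra_simps power2_eq_square)
    finally have eq: "4 * R * (w - (u + \<sigma> * b) / 4) = N" .
    have t1: "\<bar>\<sigma> * (2 * (a - 4 * b) - E * b)\<bar> = \<bar>2 * (a - 4 * b) - E * b\<bar>"
      using sg by (simp add: abs_mult)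
    have t2: "\<bar>2 * (a - 4 * b) - E * b\<bar> \<le> \<bar>2 * (a - 4 * b)\<bar> + \<bar>E * b\<bar>"
      by (rule abs_triangle_ineq4)
    have t3: "\<bar>E * b\<bar> = \<bar>E\<bar> * b" using b0 by (simp add: abs_mult)
    have t4: "\<bar>2 * (a - 4 * b)\<bar> = 2 * \<bar>a - 4 * b\<bar>" by (simp only: abs_mult abs_numeral)
    have t5: "\<bar>E * u\<bar> = \<bar>E\<bar> * \<bar>u\<bar>" by (simp add: abs_mult)
    have t6: "\<bar>N\<bar> \<le> \<bar>2 * u^2\<bar> + \<bar>E * u\<bar> + \<bar>\<sigma> * (2 * (a - 4 * b) - E * b)\<bar>"
      unfolding N_def by (smt (verit) abs_triangle_ineq abs_triangle_ineq4)
    have t7: "\<bar>2 * u^2\<bar> = 2 * u^2" by simp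
    have aN: "\<bar>N\<bar> \<le> 38 * s"
      using t1 t2 t3 t4 t5 t6 t7 us Eu Eb2 a4b bb by linarith
    have sR: "s * 7 \<le> s * R" using mult_left_mono[OF R7 s0] .
    have "\<bar>N\<bar> = \<bar>4 * R\<bar> * \<bar>w - (u + \<sigma> * b) / 4\<bar>"
      unfolding eq[symmetric] abs_mult ..
    then have nn: "\<bar>N\<bar> = (4 * R) * \<bar>w - (u + \<sigma> * b) / 4\<bar>" using Rp by simp
    have "(4 * R) * \<bar>w - (u + \<sigma> * b) / 4\<bar> \<le> (4 * R) * (2 * s)"
    proof -
      have "(4 * R) * (2 * s) = 8 * (s * R)" by simp
      then show ?thesis using aN sR nn s0 by linarith
    qed
    moreover have "0 < 4 * R" using Rp by simp
    ultimately show ?thesis by (rule mult_left_le_imp_le)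
  qed
  have "\<bar>omega_plus x y - (u + 1 * b) / 4\<bar> \<le> 2 * s"
    by (rule fin) (simp_all add: omega_plus_def a_def R_def)
  moreover have "\<bar>omega_minus x y - (u + (-1) * b) / 4\<bar> \<le> 2 * s"
    by (rule fin) (simp_all add: omega_minus_def a_def R_def)
  ultimately show ?thesis unfolding u_def s_def b_def by simp
qed





lemma sqrt_Delta_ge: "sqrt (Delta x y) \<ge> \<bar>x^2 - 4\<bar>"
proof -
  have "0 \<le> 16 * x^2 * y^2 * r1sq x y" using r1sq_pos[of x y] by simp
  then have "(x^2 - 4)^2 \<le> Delta x y" unfolding Delta_id by linarith
  then have "sqrt ((x^2 - 4)^2) \<le> sqrt (Delta x y)" by (rule real_sqrt_le_mono)
  then show ?thesis by simp
qed



lemma key_upper: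
  assumes "\<bar>x^2 - 4\<bar> = c"
  shows "sqrt (Delta x y) \<le> c + 4 * \<bar>y\<bar> * r1sq x y"
proof (rule real_le_lsqrt)
  have c: "c \<ge> 0" using assms by auto
  have r: "r1sq x y > 0" by (rule r1sq_pos)
  show "0 \<le> c + 4 * \<bar>y\<bar> * r1sq x y" using c r by simp
  have rx: "r1sq x y - x^2 \<ge> 0" unfolding r1sq_def by simp
  have cc: "c^2 = (x^2 - 4)^2" using assms by (metis power2_abs)
  have "(c + 4 * \<bar>y\<bar> * r1sq x y)^2 - Delta x y
        = 8 * \<bar>y\<bar> * r1sq x y * c + 16 * y^2 * r1sq x y * (r1sq x y - x^2)"
    unfolding Delta_id using cc by (simp add: power2_eq_square algebra_simps)
  also have "\<dots> \<ge> 0" using c r rx by simp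
  finally show "Delta x y \<le> (c + 4 * \<bar>y\<bar> * r1sq x y)^2" by simp
qed

lemma part_plus:
  assumes "0 < x" "x \<le> 2"
  shows "0 \<le> omega_plus x y \<and> omega_plus x y \<le> 2 * \<bar>y\<bar>"
proof -
  have r: "r1sq x y > 0" by (rule r1sq_pos)
  have x2: "x^2 \<le> 2^2" using assms by (intro power_mono) auto
  have c: "\<bar>x^2 - 4\<bar> = 4 - x^2" using x2 by (simp add: abs_if)
  have a: "x^2 - 4 + sqrt (Delta x y) \<ge> 0" using sqrt_Delta_ge[of x y] c by simp
  have b: "x^2 - 4 + sqrt (Delta x y) \<le> 2 * \<bar>y\<bar> * (2 * r1sq x y)"
    using key_upper[OF c, of y] by linarith
  have r2: "2 * r1sq x y > 0" using r by simp
  show ?thesis unfolding omega_plus_def using a b r2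
    by (simp add: pos_divide_le_eq)
qed

lemma part_minus:
  assumes "2 \<le> x"
  shows "- 2 * \<bar>y\<bar> \<le> omega_minus x y \<and> omega_minus x y \<le> 0"
proof -
  have r: "r1sq x y > 0" by (rule r1sq_pos)
  have x2: "2^2 \<le> x^2" using assms by (intro power_mono) auto
  have c: "\<bar>x^2 - 4\<bar> = x^2 - 4" using x2 by (simp add: abs_if)
  have a: "x^2 - 4 - sqrt (Delta x y) \<le> 0" using sqrt_Delta_ge[of x y] c by simp
  have b: "x^2 - 4 - sqrt (Delta x y) \<ge> - 2 * \<bar>y\<bar> * (2 * r1sq x y)"
    using key_upper[OF c, of y] by linarith
  have r2: "2 * r1sq x y > 0" using r by simp
  show ?thesis unfolding omega_minus_def using a b r2
    by (simp add: pos_divide_le_eq pos_le_divide_eq divide_nonpos_pos)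
qed






lemma omega_prod: "omega_plus x y * omega_minus x y = - 4 * x^2 * y^2 / r1sq x y"
proof -
  let ?a = "x^2 - 4" and ?s = "sqrt (Delta x y)" and ?r = "r1sq x y"
  have r: "?r > 0" by (rule r1sq_pos)
  have ss: "?s * ?s = Delta x y" using Delta_nonneg by simp
  have "omega_plus x y * omega_minus x y = ((?a + ?s) * (?a - ?s)) / ((2 * ?r) * (2 * ?r))"
    unfolding omega_plus_def omega_minus_def by simp
  also have "(?a + ?s) * (?a - ?s) = ?a * ?a - ?s * ?s" by (simp add: algebra_simps)
  also have "\<dots> = - 16 * x^2 * y^2 * ?r" unfolding ss by (simp add: Delta_id power2_eq_square)
  also have "- 16 * x^2 * y^2 * ?r / ((2 * ?r) * (2 * ?r)) = - 4 * x^2 * y^2 / ?r"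
    using r by (simp add: field_simps)
  finally show ?thesis .
qed

lemma wedge_bound:
  assumes "0 < a" "a \<le> 1/10" "(x, y) \<in> wedge a"
  shows "\<bar>omega_plus x y\<bar> \<ge> 1/50 * \<bar>y\<bar> \<and> \<bar>omega_minus x y\<bar> \<ge> 1/50 * \<bar>y\<bar>"
proof (cases "y = 0")
  case True
  then show ?thesis by simp
next
  case False
  let ?r = "r1sq x y"
  have yp: "\<bar>y\<bar> > 0" using False by simp
  have w: "\<bar>x - 2\<bar> \<le> 10 * \<bar>y\<bar>" "\<bar>y\<bar> \<le> 1/10" using assms by (auto simp: wedge_def)
  have x13: "1 \<le> x" "x \<le> 3" using w by auto
  have y2: "y^2 \<le> 1/100"
  proof -
    have "\<bar>y\<bar>^2 \<le> (1/10)^2" using w(2) by (intro power_mono) auto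
    then show ?thesis by (simp add: power2_eq_square)
  qed
  have x2: "1 \<le> x^2" "x^2 \<le> 9"
  proof -
    have "1^2 \<le> x^2" using x13 by (intro power_mono) auto
    then show "1 \<le> x^2" by simp
    have "x^2 \<le> 3^2" using x13 by (intro power_mono) auto
    then show "x^2 \<le> 9" by simp
  qed
  have xy2: "x^2 * y^2 \<le> 9 * y^2" using x2 by (intro mult_right_mono) auto
  have A: "(x + 2)^2 + 8 * x^2 * y^2 \<le> 26"
  proof -
    have "(x + 2)^2 \<le> 5^2" using x13 by (intro power_mono) auto
    then show ?thesis using xy2 y2 by simp
  qed
  have um: "(x - 2)^2 \<le> 100 * y^2"
  proof -
    have "\<bar>x - 2\<bar>^2 \<le> (10 * \<bar>y\<bar>)^2" using w(1) by (intro power_mono) auto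
    then show ?thesis by (simp add: power_mult_distrib)
  qed
  have B: "(x - 2)^2 + 8 * x^2 * y^2 \<le> 172 * y^2" using um xy2 by simp
  have D: "Delta x y \<le> 26 * (172 * y^2)"
    unfolding Delta_def using A B by (intro mult_mono) auto
  have sD: "sqrt (Delta x y) \<le> 67 * \<bar>y\<bar>"
  proof (rule real_le_lsqrt)
    show "0 \<le> 67 * \<bar>y\<bar>" by simp
    have "(67 * \<bar>y\<bar>)^2 = 4489 * y^2" by (simp add: power_mult_distrib)
    moreover have "0 \<le> y^2" by simp
    ultimately show "Delta x y \<le> (67 * \<bar>y\<bar>)^2" using D by linarith
  qed
  have a4: "\<bar>x^2 - 4\<bar> \<le> 50 * \<bar>y\<bar>"
  proof -
    have "\<bar>x^2 - 4\<bar> = \<bar>x - 2\<bar> * \<bar>x + 2\<bar>"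
      by (simp add: abs_mult[symmetric] power2_eq_square algebra_simps)
    also have "\<dots> \<le> (10 * \<bar>y\<bar>) * 5" using w(1) x13 by (intro mult_mono) auto
    finally show ?thesis by simp
  qed
  have r: "?r \<ge> 5" "?r \<le> 14"
  proof -
    show "?r \<ge> 5" unfolding r1sq_def using x2 by (smt (verit) zero_le_power2 mult_nonneg_nonneg)
    show "?r \<le> 14" unfolding r1sq_def using x2 xy2 y2 by simp
  qed
  have numP: "\<bar>x^2 - 4 + sqrt (Delta x y)\<bar> \<le> 117 * \<bar>y\<bar>"
    using a4 sD real_sqrt_ge_zero[OF Delta_nonneg[of x y]] by (smt (verit))
  have numM: "\<bar>x^2 - 4 - sqrt (Delta x y)\<bar> \<le> 117 * \<bar>y\<bar>"
    using a4 sD real_sqrt_ge_zero[OF Delta_nonneg[of x y]] by (smt (verit))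
  have bnd: "\<bar>n / (2 * ?r)\<bar> \<le> 12 * \<bar>y\<bar>" if "\<bar>n\<bar> \<le> 117 * \<bar>y\<bar>" for n
  proof -
    have "\<bar>n / (2 * ?r)\<bar> = \<bar>n\<bar> / (2 * ?r)" using r by simp
    also have "\<dots> \<le> (117 * \<bar>y\<bar>) / 10"
      using that r by (intro frac_le) auto
    also have "\<dots> \<le> 12 * \<bar>y\<bar>" by simp
    finally show ?thesis .
  qed
  have P12: "\<bar>omega_plus x y\<bar> \<le> 12 * \<bar>y\<bar>" unfolding omega_plus_def using bnd[OF numP] .
  have M12: "\<bar>omega_minus x y\<bar> \<le> 12 * \<bar>y\<bar>" unfolding omega_minus_def using bnd[OF numM] .
  have prod: "\<bar>omega_plus x y\<bar> * \<bar>omega_minus x y\<bar> \<ge> 2/7 * y^2"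
  proof -
    have "\<bar>omega_plus x y\<bar> * \<bar>omega_minus x y\<bar> = 4 * x^2 * y^2 / ?r"
      using omega_prod[of x y] r by (simp add: abs_mult[symmetric])
    also have "4 * x^2 * y^2 / ?r \<ge> 4 * 1 * y^2 / 14"
      using r x2 by (intro frac_le mult_mono) auto
    finally show ?thesis by simp
  qed
  have gen: "p \<ge> 1/50 * \<bar>y\<bar>" if "p \<ge> 0" "q \<ge> 0" "q \<le> 12 * \<bar>y\<bar>" "p * q \<ge> 2/7 * y^2" for p q
  proof (rule ccontr)
    assume "\<not> ?thesis"
    then have "p * q \<le> (1/50 * \<bar>y\<bar>) * (12 * \<bar>y\<bar>)" using that by (intro mult_mono) auto
    also have "\<dots> = 12/50 * y^2" by (simp add: power2_eq_square)
    finally have "2/7 * y^2 \<le> 12/50 * y^2" using that by linarith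
    then show False using yp by simp
  qed
  show ?thesis
    using gen[OF _ _ M12 prod] gen[OF _ _ P12, of "\<bar>omega_minus x y\<bar>"] prod
    by (simp add: mult.commute)
qed


lemma bigO_parts:
  "(\<lambda>p. omega_plus (fst p) (snd p)
            - ((fst p - 2) + sqrt ((fst p - 2)^2 + 32 * (snd p)^2)) / 4)
        \<in> O[at p0 within regR](\<lambda>p. (fst p - 2)^2 + 32 * (snd p)^2)
   \<and> (\<lambda>p. omega_minus (fst p) (snd p)
            - ((fst p - 2) - sqrt ((fst p - 2)^2 + 32 * (snd p)^2)) / 4)
        \<in> O[at p0 within regR](\<lambda>p. (fst p - 2)^2 + 32 * (snd p)^2)"
proof -
  have near: "\<bar>fst p - 2\<bar> \<le> 1/10 \<and> \<bar>snd p\<bar> \<le> 1/10" if "dist p p0 < 1/10" for p :: "real \<times> real"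
  proof -
    have "dist (fst p) (fst p0) \<le> dist p p0" by (rule dist_fst_le)
    moreover have "dist (snd p) (snd p0) \<le> dist p p0" by (rule dist_snd_le)
    ultimately show ?thesis using that by (simp add: p0_def dist_real_def)
  qed
  have gn: "norm ((fst p - 2)^2 + 32 * (snd p)^2) = (fst p - 2)^2 + 32 * (snd p)^2" for p :: "real \<times> real"
    by simp
  have ev1: "eventually (\<lambda>p. norm (omega_plus (fst p) (snd p)
            - ((fst p - 2) + sqrt ((fst p - 2)^2 + 32 * (snd p)^2)) / 4)
        \<le> 2 * norm ((fst p - 2)^2 + 32 * (snd p)^2)) (at p0 within regR)"
    unfolding eventually_at
    by (rule exI[of _ "1/10"]) (use near core_bounds in \<open>auto simp: gn\<close>)
  have ev2: "eventually (\<lambda>p. norm (omega_minus (fst p) (snd p)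
            - ((fst p - 2) - sqrt ((fst p - 2)^2 + 32 * (snd p)^2)) / 4)
        \<le> 2 * norm ((fst p - 2)^2 + 32 * (snd p)^2)) (at p0 within regR)"
    unfolding eventually_at
    by (rule exI[of _ "1/10"]) (use near core_bounds in \<open>auto simp: gn\<close>)
  show ?thesis using bigoI[OF ev1] bigoI[OF ev2] by blast
qed

theorem lemma4p1:
  shows "(\<exists>U. regR - {p0} \<subseteq> U \<and> smooth_on U (\<lambda>p. omega_plus (fst p) (snd p))
                                \<and> smooth_on U (\<lambda>p. omega_minus (fst p) (snd p)))
    \<and> (\<lambda>p. omega_plus (fst p) (snd p)
            - ((fst p - 2) + sqrt ((fst p - 2)^2 + 32 * (snd p)^2)) / 4)
        \<in> O[at p0 within regR](\<lambda>p. (fst p - 2)^2 + 32 * (snd p)^2)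
    \<and> (\<lambda>p. omega_minus (fst p) (snd p)
            - ((fst p - 2) - sqrt ((fst p - 2)^2 + 32 * (snd p)^2)) / 4)
        \<in> O[at p0 within regR](\<lambda>p. (fst p - 2)^2 + 32 * (snd p)^2)
    \<and> (\<forall>(x, y) \<in> regR_plus. 0 \<le> omega_plus x y \<and> omega_plus x y \<le> 2 * \<bar>y\<bar>)
    \<and> (\<forall>(x, y) \<in> regR_minus. - 2 * \<bar>y\<bar> \<le> omega_minus x y \<and> omega_minus x y \<le> 0)
    \<and> (\<forall>a::real. 0 < a \<and> a \<le> 1/10 \<longrightarrow>
         (\<exists>C>0. \<forall>(x, y) \<in> wedge a.
             \<bar>omega_plus x y\<bar> \<ge> C * \<bar>y\<bar> \<and> \<bar>omega_minus x y\<bar> \<ge> C * \<bar>y\<bar>))"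
proof (intro conjI)
  show "\<exists>U. regR - {p0} \<subseteq> U \<and> smooth_on U (\<lambda>p. omega_plus (fst p) (snd p))
                                \<and> smooth_on U (\<lambda>p. omega_minus (fst p) (snd p))"
    by (rule smooth_part)
  show "\<forall>(x, y) \<in> regR_plus. 0 \<le> omega_plus x y \<and> omega_plus x y \<le> 2 * \<bar>y\<bar>"
    using part_plus by (auto simp: regR_plus_def regR_def)
  show "\<forall>(x, y) \<in> regR_minus. - 2 * \<bar>y\<bar> \<le> omega_minus x y \<and> omega_minus x y \<le> 0"
    using part_minus by (auto simp: regR_minus_def)
  show "\<forall>a::real. 0 < a \<and> a \<le> 1/10 \<longrightarrow>
         (\<exists>C>0. \<forall>(x, y) \<in> wedge a.
             \<bar>omega_plus x y\<bar> \<ge> C * \<bar>y\<bar> \<and> \<bar>omega_minus x y\<bar> \<ge> C * \<bar>y\<bar>)"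
  proof (intro allI impI)
    fix a :: real assume "0 < a \<and> a \<le> 1/10"
    then show "\<exists>C>0. \<forall>(x, y) \<in> wedge a.
             \<bar>omega_plus x y\<bar> \<ge> C * \<bar>y\<bar> \<and> \<bar>omega_minus x y\<bar> \<ge> C * \<bar>y\<bar>"
      using wedge_bound[of a] by (intro exI[of _ "1/50"]) auto
  qed
qed (use bigO_parts in blast)+

end
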